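(* Let $\varphi$ be an Orlicz $N$-function with Young–Fenchel transform $\psi$ and let $q_\varphi$ be the generalized inverse of the density of $\varphi$. Let $\{X_{k,n},k\ge1,n\ge1\}$ be a double array of $\varphi$-subgaussian random variables with $\sup_{k,n\in\mathbb N}\tau_\varphi(X_{k,n})\le1$. Suppose there exists $\varepsilon_0>0$ such that for every $\varepsilon\in(0,\varepsilon_0]$ $$\int_0^{+\infty}\psi(x)q_\varphi(x)\exp(-\varepsilon q_\varphi(x))\,dx<+\infty.$$ Then $$\lim_{m\vee j\to+\infty}\left(\max_{1\le k\le m,1\le n\le j}X_{k,n}-\psi^{-1}(\ln(mj))\right)^+=0\quad\text{a.s.}$$
   Context: An Orlicz $N$-function is a continuous even convex function $\varphi:\mathbb R\to\mathbb R$ with $\varphi(0)=0$, increasing on $(0,\infty)$, with $\varphi(x)/x\to0$ as $x\to0$ and $\varphi(x)/x\to+\infty$ as $x\to+\infty$. It can be written $\varphi(x)=\int_0^{|x|}p_\varphi(t)\,dt$ with non-decreasing density $p_\varphi$; its generalized inverse is $q_\varphi(t)=\sup\{u\ge0:p_\varphi(u)\le t\}$. The Young–Fenchel transform is $\psi(x)=\sup_{y\in\mathbb R}(xy-\varphi(y))$, with $\psi(x)=\int_0^{|x|}q_\varphi(t)dt$; $\psi^{-1}$ is the inverse of $\psi$ on $[0,\infty)$. A random variable $X$ is $\varphi$-subgaussian if $EX=0$ and there is a finite $a>0$ with $E\exp(tX)\le\exp(\varphi(at))$ for all $t$; $\tau_\varphi(X)=\inf\{a>0:E\exp(tX)\le\exp(\varphi(at))\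 \forall t\}$. $u^+=\max(u,0)$. $\lim_{m\vee j\to\infty}b_{m,j}=b$ means: for every $\varepsilon>0$ there is $N$ with $|b_{m,j}-b|<\varepsilon$ whenever $\max(m,j)\ge N$. *)

theory Defs
  imports "HOL-Probability.Probability"
begin

definition N_function :: "(real \<Rightarrow> real) \<Rightarrow> bool" where
  "N_function \<phi> \<longleftrightarrow>
     continuous_on UNIV \<phi> \<and> (\<forall>x. \<phi> (-x) = \<phi> x) \<and> convex_on UNIV \<phi> \<and> \<phi> 0 = 0 \<and>
     strict_mono_on {0<..} \<phi> \<and>
     ((\<lambda>x. \<phi> x / x) \<longlongrightarrow> 0) (at_right 0) \<and>
     filterlim (\<lambda>x. \<phi> x / x) at_top at_top"

definition gen_inv :: "(real \<Rightarrow> real) \<Rightarrow> real \<Rightarrow> real" where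
  "gen_inv p t = Sup {u. u \<ge> 0 \<and> p u \<le> t}"

definition young_fenchel :: "(real \<Rightarrow> real) \<Rightarrow> real \<Rightarrow> real" where
  "young_fenchel \<phi> x = (SUP y. x * y - \<phi> y)"

definition inv_nonneg :: "(real \<Rightarrow> real) \<Rightarrow> real \<Rightarrow> real" where
  "inv_nonneg f v = (THE x. x \<ge> 0 \<and> f x = v)"

definition subg_bound :: "'a measure \<Rightarrow> (real \<Rightarrow> real) \<Rightarrow> ('a \<Rightarrow> real) \<Rightarrow> real \<Rightarrow> bool" where
  "subg_bound M \<phi> X a \<longleftrightarrow>
     (\<forall>t. integrable M (\<lambda>\<omega>. exp (t * X \<omega>)) \<and>
          (\<integral>\<omega>. exp (t * X \<omega>) \<partial>M) \<le> exp (\<phi> (a * t)))"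

definition phi_subgaussian :: "'a measure \<Rightarrow> (real \<Rightarrow> real) \<Rightarrow> ('a \<Rightarrow> real) \<Rightarrow> bool" where
  "phi_subgaussian M \<phi> X \<longleftrightarrow>
     X \<in> borel_measurable M \<and> integrable M X \<and> (\<integral>\<omega>. X \<omega> \<partial>M) = 0 \<and>
     (\<exists>a>0. subg_bound M \<phi> X a)"

definition tau_phi :: "'a measure \<Rightarrow> (real \<Rightarrow> real) \<Rightarrow> ('a \<Rightarrow> real) \<Rightarrow> real" where
  "tau_phi M \<phi> X = Inf {a. a > 0 \<and> subg_bound M \<phi> X a}"

end

theory Submission
  imports Defs
begin


lemma phi_nonneg:
  assumes N: "N_function \<phi>" shows "\<phi> x \<ge> 0"
proof -
  have c: "convex_on UNIV \<phi>" and e: "\<phi> (-x) = \<phi> x" and z: "\<phi> 0 = 0"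
    using N unfolding N_function_def by auto
  have "\<phi> ((1 - 1/2) *\<^sub>R x + (1/2) *\<^sub>R (-x)) \<le> (1 - 1/2) * \<phi> x + (1/2) * \<phi> (-x)"
    by (rule convex_onD[OF c]) auto
  then show ?thesis using e z by simp
qed

lemma phi_mono0:
  assumes N: "N_function \<phi>" and "0 \<le> a" "a \<le> b" shows "\<phi> a \<le> \<phi> b"
proof (cases "a = 0")
  case True then show ?thesis using N phi_nonneg[OF N, of b] unfolding N_function_def by auto
next
  case False
  then have "a > 0" "b > 0" using assms by auto
  then show ?thesis using N assms unfolding N_function_def strict_mono_on_def
    by (metis greaterThan_iff order_le_less)
qed

lemma phi_even: assumes N: "N_function \<phi>" shows "\<phi> x = \<phi> \<bar>x\<bar>"
proof -
  have "\<forall>x. \<phi> (-x) = \<phi> x" using N unfolding N_function_def by auto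
  then show ?thesis by (cases "x \<ge> 0") (simp_all add: abs_of_nonneg abs_of_neg)
qed

lemma phi_mono_abs:
  assumes N: "N_function \<phi>" and "\<bar>a\<bar> \<le> \<bar>b\<bar>" shows "\<phi> a \<le> \<phi> b"
  using phi_mono0[OF N, of "\<bar>a\<bar>" "\<bar>b\<bar>"] phi_even[OF N, of a] phi_even[OF N, of b] assms by simp

lemma psi_bound:
  assumes N: "N_function \<phi>" shows "\<exists>B. \<forall>y. x * y - \<phi> y \<le> B"
proof -
  have "filterlim (\<lambda>x. \<phi> x / x) at_top at_top" using N unfolding N_function_def by auto
  then have "eventually (\<lambda>y. \<bar>x\<bar> + 1 \<le> \<phi> y / y) at_top"
    by (simp add: filterlim_at_top)
  then obtain R where R: "\<And>y. y \<ge> R \<Longrightarrow> \<bar>x\<bar> + 1 \<le> \<phi> y / y"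
    by (auto simp: eventually_at_top_linorder)
  define R' where "R' = max R 1"
  have *: "\<bar>x\<bar> * z - \<phi> z \<le> \<bar>x\<bar> * R'" if "z \<ge> 0" for z
  proof (cases "z \<ge> R'")
    case True
    then have "z > 0" "\<bar>x\<bar> + 1 \<le> \<phi> z / z" using R unfolding R'_def by auto
    then have "(\<bar>x\<bar> + 1) * z \<le> \<phi> z" by (simp add: field_simps)
    then have "\<bar>x\<bar> * z - \<phi> z \<le> -z" by (simp add: algebra_simps)
    moreover have "0 \<le> \<bar>x\<bar> * R'" unfolding R'_def by simp
    ultimately show ?thesis using \<open>z > 0\<close> by linarith
  next
    case False
    then have "\<bar>x\<bar> * z \<le> \<bar>x\<bar> * R'" by (intro mult_left_mono) auto
    then show ?thesis using phi_nonneg[OF N, of z] by linarith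
  qed
  have "x * y - \<phi> y \<le> \<bar>x\<bar> * R'" for y
  proof -
    have "x * y \<le> \<bar>x\<bar> * \<bar>y\<bar>" by (simp add: abs_mult[symmetric])
    then show ?thesis using *[of "\<bar>y\<bar>"] phi_even[OF N, of y] by simp
  qed
  then show ?thesis by blast
qed

lemma psi_bdd: assumes N: "N_function \<phi>" shows "bdd_above (range (\<lambda>y. x * y - \<phi> y))"
  using psi_bound[OF N, of x] by (auto simp: bdd_above_def)

lemma psi_ge: assumes N: "N_function \<phi>" shows "x * y - \<phi> y \<le> young_fenchel \<phi> x"
  unfolding young_fenchel_def by (rule cSUP_upper[OF _ psi_bdd[OF N]]) auto

lemma psi_le: assumes N: "N_function \<phi>" and "\<And>y. x * y - \<phi> y \<le> B"
  shows "young_fenchel \<phi> x \<le> B"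
  unfolding young_fenchel_def by (rule cSUP_least) (use assms in auto)

lemma psi_0: assumes N: "N_function \<phi>" shows "young_fenchel \<phi> 0 = 0"
proof -
  have "young_fenchel \<phi> 0 \<le> 0" by (rule psi_le[OF N]) (use phi_nonneg[OF N] in auto)
  moreover have "0 * 0 - \<phi> 0 \<le> young_fenchel \<phi> 0" by (rule psi_ge[OF N])
  ultimately show ?thesis using N unfolding N_function_def by auto
qed

lemma psi_nonneg: assumes N: "N_function \<phi>" and "x \<ge> 0" shows "young_fenchel \<phi> x \<ge> 0"
  using psi_ge[OF N, of x 0] N unfolding N_function_def by auto

lemma psi_pos: assumes N: "N_function \<phi>" and "x > 0" shows "young_fenchel \<phi> x > 0"
proof -
  have "((\<lambda>x. \<phi> x / x) \<longlongrightarrow> 0) (at_right 0)" using N unfolding N_function_def by auto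
  then have "eventually (\<lambda>y. \<phi> y / y < x) (at_right 0)"
    using assms(2) by (simp add: order_tendsto_iff)
  moreover have "eventually (\<lambda>y. y > 0) (at_right (0::real))" by (simp add: eventually_at_right_less)
  ultimately have "eventually (\<lambda>y. y > 0 \<and> \<phi> y / y < x) (at_right (0::real))"
    by (auto elim: eventually_elim2)
  then have "\<exists>y. y > 0 \<and> \<phi> y / y < x" by (rule eventually_happens'[rotated]) simp
  then obtain y where y: "y > 0" "\<phi> y / y < x" by blast
  then have "\<phi> y < x * y" by (simp add: field_simps)
  then show ?thesis using psi_ge[OF N, of x y] by simp
qed

lemma psi_convex: assumes N: "N_function \<phi>" shows "convex_on UNIV (young_fenchel \<phi>)"
proof (rule convex_onI)
  fix t x z :: real assume t: "0 < t" "t < 1"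
  show "young_fenchel \<phi> ((1 - t) *\<^sub>R x + t *\<^sub>R z) \<le> (1 - t) * young_fenchel \<phi> x + t * young_fenchel \<phi> z"
    unfolding real_scaleR_def
  proof (rule psi_le[OF N])
    fix y
    have "((1 - t) * x + t * z) * y - \<phi> y = (1 - t) * (x * y - \<phi> y) + t * (z * y - \<phi> y)"
      by (simp add: algebra_simps)
    also have "\<dots> \<le> (1 - t) * young_fenchel \<phi> x + t * young_fenchel \<phi> z"
      using psi_ge[OF N, of x y] psi_ge[OF N, of z y] t
      by (intro add_mono mult_left_mono) auto
    finally show "((1 - t) * x + t * z) * y - \<phi> y \<le> \<dots>" .
  qed
qed simp

lemma psi_cont: assumes N: "N_function \<phi>" shows "continuous_on UNIV (young_fenchel \<phi>)"
  by (rule convex_on_continuous[OF open_UNIV psi_convex[OF N]])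

lemma psi_strict: assumes N: "N_function \<phi>" and "0 \<le> x" "x < z"
  shows "young_fenchel \<phi> x < young_fenchel \<phi> z"
proof -
  have zp: "young_fenchel \<phi> z > 0" using psi_pos[OF N] assms by auto
  define t where "t = x / z"
  have t: "0 \<le> t" "t < 1" using assms unfolding t_def by auto
  have "x = (1 - t) * 0 + t * z" using assms unfolding t_def by auto
  then have "young_fenchel \<phi> x \<le> (1 - t) * young_fenchel \<phi> 0 + t * young_fenchel \<phi> z"
    using convex_onD[OF psi_convex[OF N], of t 0 z] t by auto
  also have "\<dots> = t * young_fenchel \<phi> z" using psi_0[OF N] by simp
  also have "\<dots> < young_fenchel \<phi> z" using t zp by simp
  finally show ?thesis .
qed

lemma psi_mono: assumes N: "N_function \<phi>" and "0 \<le> x" "x \<le> z"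
  shows "young_fenchel \<phi> x \<le> young_fenchel \<phi> z"
  using psi_strict[OF N, of x z] assms by (cases "x = z") auto

lemma psi_inv:
  assumes N: "N_function \<phi>" and "v \<ge> 0"
  shows "inv_nonneg (young_fenchel \<phi>) v \<ge> 0 \<and> young_fenchel \<phi> (inv_nonneg (young_fenchel \<phi>) v) = v"
proof -
  let ?g = "young_fenchel \<phi>"
  define b where "b = v + \<phi> 1"
  have b: "?g b \<ge> v" using psi_ge[OF N, of b 1] unfolding b_def by simp
  have b0: "b \<ge> 0" using phi_nonneg[OF N, of 1] assms unfolding b_def by simp
  have "\<exists>x\<ge>0. x \<le> b \<and> ?g x = v"
    using IVT'[of ?g 0 v b] psi_0[OF N] b b0 assms continuous_on_subset[OF psi_cont[OF N]]
    by auto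
  then obtain x where x: "x \<ge> 0" "?g x = v" by auto
  have "\<exists>!x. x \<ge> 0 \<and> ?g x = v"
  proof (rule ex1I[of _ x])
    fix y assume y: "y \<ge> 0 \<and> ?g y = v"
    show "y = x"
      using psi_strict[OF N, of x y] psi_strict[OF N, of y x] x y by (cases "x < y"; cases "y < x") auto
  qed (use x in auto)
  then show ?thesis unfolding inv_nonneg_def by (rule theI')
qed


lemma p_int: fixes p :: "real \<Rightarrow> real" assumes "mono p" shows "p integrable_on {a..b}"
proof -
  have "mono_on {a..b} p" using assms by (simp add: monotone_on_def mono_def)
  then show ?thesis by (rule integrable_on_mono_on)
qed

lemma int_lower:
  fixes p :: "real \<Rightarrow> real"
  assumes "mono p" "a \<le> b" "\<And>u. a < u \<Longrightarrow> u < b \<Longrightarrow> c \<le> p u"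
  shows "c * (b - a) \<le> integral {a..b} p"
proof -
  define g where "g u = (if u \<in> {a,b} then c else p u)" for u
  have eq: "integral {a..b} p = integral {a..b} g"
    by (rule integral_spike[of "{a,b}"]) (auto simp: g_def)
  have gi: "g integrable_on {a..b}"
    by (rule integrable_spike_finite[of "{a,b}" _ _ p]) (auto simp: g_def p_int[OF assms(1)])
  have "integral {a..b} (\<lambda>_. c) \<le> integral {a..b} g"
    by (rule integral_le[OF _ gi]) (use assms in \<open>auto simp: g_def\<close>)
  then show ?thesis using eq assms by (simp add: mult.commute)
qed

lemma int_upper:
  fixes p :: "real \<Rightarrow> real"
  assumes "mono p" "a \<le> b" "\<And>u. a < u \<Longrightarrow> u < b \<Longrightarrow> p u \<le> c"
  shows "integral {a..b} p \<le> c * (b - a)"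
proof -
  define g where "g u = (if u \<in> {a,b} then c else p u)" for u
  have eq: "integral {a..b} p = integral {a..b} g"
    by (rule integral_spike[of "{a,b}"]) (auto simp: g_def)
  have gi: "g integrable_on {a..b}"
    by (rule integrable_spike_finite[of "{a,b}" _ _ p]) (auto simp: g_def p_int[OF assms(1)])
  have "integral {a..b} g \<le> integral {a..b} (\<lambda>_. c)"
    by (rule integral_le[OF gi]) (use assms in \<open>auto simp: g_def\<close>)
  then show ?thesis using eq assms by (simp add: mult.commute)
qed

lemma phi_diff:
  fixes p :: "real \<Rightarrow> real"
  assumes "mono p" "\<And>x. \<phi> x = integral {0..\<bar>x\<bar>} p" "0 \<le> a" "a \<le> b"
  shows "\<phi> b - \<phi> a = integral {a..b} p"
  using Henstock_Kurzweil_Integration.integral_combine[OF assms(3,4) p_int[OF assms(1)]] assms(2)[of a] assms(2)[of b] assms(3,4)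
  by simp


locale orl =
  fixes \<phi> p :: "real \<Rightarrow> real"
  assumes N: "N_function \<phi>" and mp: "mono p" and phiint: "\<And>x. \<phi> x = integral {0..\<bar>x\<bar>} p"
begin

lemma small_p: assumes "x > 0" shows "\<exists>u>0. p u \<le> x"
proof (rule ccontr)
  assume "\<not> ?thesis"
  then have pu: "\<And>u. u > 0 \<Longrightarrow> x < p u" by force
  have "((\<lambda>x. \<phi> x / x) \<longlongrightarrow> 0) (at_right 0)" using N unfolding N_function_def by auto
  then have "eventually (\<lambda>y. \<phi> y / y < x) (at_right 0)"
    using assms by (simp add: order_tendsto_iff)
  moreover have "eventually (\<lambda>y. y > 0) (at_right (0::real))" by (simp add: eventually_at_right_less)
  ultimately have "eventually (\<lambda>y. y > 0 \<and> \<phi> y / y < x) (at_right (0::real))"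
    by (auto elim: eventually_elim2)
  then have "\<exists>y. y > 0 \<and> \<phi> y / y < x" by (rule eventually_happens'[rotated]) simp
  then obtain y where y: "y > 0" "\<phi> y / y < x" by blast
  have "x * (y - 0) \<le> integral {0..y} p"
    by (rule int_lower[OF mp]) (use y pu in \<open>auto intro: less_imp_le\<close>)
  then have "x * y \<le> \<phi> y" using phiint[of y] y by simp
  then show False using y by (simp add: field_simps)
qed

lemma big_p: "\<exists>U>0. \<forall>u\<ge>U. x < p u"
proof -
  have "filterlim (\<lambda>x. \<phi> x / x) at_top at_top" using N unfolding N_function_def by auto
  then have "eventually (\<lambda>y. \<bar>x\<bar> + 1 \<le> \<phi> y / y) at_top"
    by (simp add: filterlim_at_top)
  then obtain R where R: "\<And>y. y \<ge> R \<Longrightarrow> \<bar>x\<bar> + 1 \<le> \<phi> y / y"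
    by (auto simp: eventually_at_top_linorder)
  define y where "y = max R 1"
  have y: "y > 0" "\<bar>x\<bar> + 1 \<le> \<phi> y / y" using R unfolding y_def by auto
  then have 1: "(\<bar>x\<bar> + 1) * y \<le> \<phi> y" by (simp add: field_simps)
  have "x < p y"
  proof (rule ccontr)
    assume "\<not> x < p y"
    then have "\<And>u. u \<le> y \<Longrightarrow> p u \<le> x" using mp by (meson monoD order_trans not_less)
    then have "integral {0..y} p \<le> x * (y - 0)"
      by (intro int_upper[OF mp]) (use y in auto)
    then have "\<phi> y \<le> x * y" using phiint[of y] y by simp
    moreover have "x * y \<le> \<bar>x\<bar> * y" using y by (intro mult_right_mono) auto
    moreover have "(\<bar>x\<bar> + 1) * y = \<bar>x\<bar> * y + y" by (simp add: algebra_simps)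
    ultimately show False using 1 y by linarith
  qed
  then have "\<forall>u\<ge>y. x < p u" using mp by (meson monoD order_less_le_trans)
  then show ?thesis using y by blast
qed

definition S where "S x = {u. u \<ge> 0 \<and> p u \<le> x}"

lemma S_ne: assumes "x > 0" shows "0 \<in> S x"
proof -
  obtain u where "u > 0" "p u \<le> x" using small_p[OF assms] by blast
  then have "p 0 \<le> x" using mp by (meson monoD less_imp_le order_trans)
  then show ?thesis unfolding S_def by auto
qed

lemma S_bdd: "bdd_above (S x)"
proof -
  obtain U where U: "U > 0" "\<forall>u\<ge>U. x < p u" using big_p by blast
  have "u \<le> U" if "u \<in> S x" for u
  proof (rule ccontr)
    assume "\<not> u \<le> U"
    then have "x < p u" using U by auto
    then show False using that unfolding S_def by simp
  qed
  then have "\<forall>u\<in>S x. u \<le> U" by blast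
  then show ?thesis by (auto simp: bdd_above_def)
qed

lemma q_eq: "gen_inv p x = Sup (S x)" unfolding gen_inv_def S_def by simp

lemma q_nonneg: assumes "x > 0" shows "gen_inv p x \<ge> 0"
  unfolding q_eq using cSup_upper[OF S_ne[OF assms] S_bdd] .

lemma q_below: assumes "x > 0" "0 \<le> u" "u < gen_inv p x" shows "p u \<le> x"
proof -
  have "S x \<noteq> {}" using S_ne[OF assms(1)] by blast
  then have "\<exists>v\<in>S x. u < v" using less_cSup_iff[OF \<open>S x \<noteq> {}\<close> S_bdd, of u] assms(3)
    unfolding q_eq by blast
  then obtain v where "v \<in> S x" "u < v" by blast
  then have "p v \<le> x" "p u \<le> p v" using monoD[OF mp, of u v] unfolding S_def by auto
  then show ?thesis by linarith
qed

lemma q_above: assumes "x > 0" "gen_inv p x < u" shows "x < p u"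
proof (rule ccontr)
  assume "\<not> x < p u"
  then have "u \<in> S x" unfolding S_def using q_nonneg[OF assms(1)] assms(2) by auto
  then have "u \<le> gen_inv p x" unfolding q_eq using cSup_upper[OF _ S_bdd] by blast
  then show False using assms by simp
qed

lemma q_mono: assumes "0 < x" "x \<le> x'" shows "gen_inv p x \<le> gen_inv p x'"
  unfolding q_eq
  by (rule cSup_subset_mono) (use S_ne[OF assms(1)] S_bdd assms in \<open>auto simp: S_def\<close>)

lemma q_ge1: assumes "x > 0" "p 1 \<le> x" shows "gen_inv p x \<ge> 1"
proof -
  have "1 \<in> S x" using assms unfolding S_def by auto
  then show ?thesis unfolding q_eq using cSup_upper[OF _ S_bdd] by blast
qed

lemma young: assumes "x > 0"
  shows "young_fenchel \<phi> x = x * gen_inv p x - \<phi> (gen_inv p x)"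
proof (rule antisym)
  define Q where "Q = gen_inv p x"
  have Q0: "Q \<ge> 0" using q_nonneg[OF assms] unfolding Q_def .
  have key: "x * y - \<phi> y \<le> x * Q - \<phi> Q" if "y \<ge> 0" for y
  proof (cases "Q \<le> y")
    case True
    have "x * (y - Q) \<le> integral {Q..y} p"
    proof (rule int_lower[OF mp True])
      fix u assume "Q < u"
      then have "x < p u" using q_above[OF assms, of u] unfolding Q_def by blast
      then show "x \<le> p u" by simp
    qed
    also have "\<dots> = \<phi> y - \<phi> Q" using phi_diff[OF mp phiint Q0 True] by (rule sym)
    finally show ?thesis by (simp add: algebra_simps)
  next
    case False
    have "integral {y..Q} p \<le> x * (Q - y)"
    proof (rule int_upper[OF mp])
      show "y \<le> Q" using False by simp
      fix u assume "y < u" "u < Q"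
      then show "p u \<le> x" using q_below[OF assms, of u] that unfolding Q_def by simp
    qed
    moreover have "integral {y..Q} p = \<phi> Q - \<phi> y" using phi_diff[OF mp phiint that, of Q] False by simp
    ultimately show ?thesis by (simp add: algebra_simps)
  qed
  show "young_fenchel \<phi> x \<le> x * gen_inv p x - \<phi> (gen_inv p x)"
    unfolding Q_def[symmetric]
  proof (rule psi_le[OF N])
    fix y
    have "x * y \<le> x * \<bar>y\<bar>" using assms by (intro mult_left_mono) auto
    then have "x * y - \<phi> y \<le> x * \<bar>y\<bar> - \<phi> \<bar>y\<bar>" using phi_even[OF N, of y] by simp
    also have "\<dots> \<le> x * Q - \<phi> Q" by (rule key) simp
    finally show "x * y - \<phi> y \<le> x * Q - \<phi> Q" .
  qed
  show "x * gen_inv p x - \<phi> (gen_inv p x) \<le> young_fenchel \<phi> x" by (rule psi_ge[OF N])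
qed

lemma psi_incr: assumes "x > 0" "h \<ge> 0"
  shows "young_fenchel \<phi> x + h * gen_inv p x \<le> young_fenchel \<phi> (x + h)"
  using young[OF assms(1)] psi_ge[OF N, of "x + h" "gen_inv p x"] by (simp add: algebra_simps)

end


lemma subg_one:
  assumes N: "N_function \<phi>" and sg: "phi_subgaussian M \<phi> X" and tau: "tau_phi M \<phi> X \<le> 1"
  shows "integrable M (\<lambda>\<omega>. exp (t * X \<omega>)) \<and> (\<integral>\<omega>. exp (t * X \<omega>) \<partial>M) \<le> exp (\<phi> t)"
proof -
  define T where "T = {a. a > 0 \<and> subg_bound M \<phi> X a}"
  obtain a0 where a0: "a0 > 0" "subg_bound M \<phi> X a0" using sg unfolding phi_subgaussian_def by blast
  have Tne: "T \<noteq> {}" using a0 unfolding T_def by blast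
  have Tb: "bdd_below T" unfolding T_def by (rule bdd_belowI[of _ 0]) auto
  have int: "integrable M (\<lambda>\<omega>. exp (t * X \<omega>))" using a0 unfolding subg_bound_def by blast
  define I where "I = (\<integral>\<omega>. exp (t * X \<omega>) \<partial>M)"
  have le: "I \<le> exp (\<phi> (a * t))" if "a > 1" for a
  proof -
    have "Inf T < a" using tau that unfolding tau_phi_def T_def by simp
    then obtain a' where a': "a' \<in> T" "a' < a" using cInf_less_iff[OF Tne Tb] by blast
    then have "a' > 0" "I \<le> exp (\<phi> (a' * t))" unfolding T_def subg_bound_def I_def by auto
    moreover have "\<phi> (a' * t) \<le> \<phi> (a * t)"
    proof (rule phi_mono_abs[OF N])
      have "\<bar>a'\<bar> \<le> \<bar>a\<bar>" using a' \<open>a' > 0\<close> by simp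
      then show "\<bar>a' * t\<bar> \<le> \<bar>a * t\<bar>" unfolding abs_mult by (rule mult_right_mono) simp
    qed
    ultimately show ?thesis using order_trans by fastforce
  qed
  have cont: "continuous_on UNIV \<phi>" using N unfolding N_function_def by auto
  have lim: "((\<lambda>a. exp (\<phi> (a * t))) \<longlongrightarrow> exp (\<phi> (1 * t))) (at_right 1)"
    by (intro tendsto_exp continuous_on_tendsto_compose[OF cont] tendsto_intros) auto
  have "I \<le> exp (\<phi> (1 * t))"
  proof (rule tendsto_lowerbound[OF lim])
    show "\<forall>\<^sub>F a in at_right 1. I \<le> exp (\<phi> (a * t))"
      by (rule eventually_mono[OF eventually_at_right_less]) (use le in auto)
  qed simp
  then show ?thesis using int unfolding I_def by simp
qed

lemma chernoff:
  assumes P: "prob_space M" and N: "N_function \<phi>" and Xm: "X \<in> borel_measurable M"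
    and b: "\<And>t. integrable M (\<lambda>\<omega>. exp (t * X \<omega>)) \<and> (\<integral>\<omega>. exp (t * X \<omega>) \<partial>M) \<le> exp (\<phi> t)"
    and u: "u \<ge> 0"
  shows "measure M {\<omega> \<in> space M. u \<le> X \<omega>} \<le> exp (- young_fenchel \<phi> u)"
proof -
  define Pr where "Pr = measure M {\<omega> \<in> space M. u \<le> X \<omega>}"
  have P1: "Pr \<le> 1" unfolding Pr_def using prob_space.prob_le_1[OF P] by blast
  show ?thesis
  proof (cases "Pr = 0")
    case True then show ?thesis unfolding Pr_def by simp
  next
    case False
    have "Pr \<ge> 0" unfolding Pr_def by simp
    then have Ppos: "Pr > 0" using False by linarith
    have "young_fenchel \<phi> u \<le> - ln Pr"
    proof (rule psi_le[OF N])
      fix y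
      show "u * y - \<phi> y \<le> - ln Pr"
      proof (cases "y > 0")
        case False
        then have "u * y \<le> 0" using u by (simp add: mult_nonneg_nonpos)
        moreover have "ln Pr \<le> 0" using P1 Ppos by simp
        ultimately show ?thesis using phi_nonneg[OF N, of y] by linarith
      next
        case True
        have seteq: "{\<omega> \<in> space M. u \<le> X \<omega>} = {\<omega> \<in> space M. exp (y * u) \<le> exp (y * X \<omega>)}"
          using True by auto
        have "Pr \<le> (\<integral>\<omega>. exp (y * X \<omega>) \<partial>M) / exp (y * u)"
          unfolding Pr_def seteq
          by (rule integral_Markov_inequality_measure[of _ _ "space M"]) (use b in auto)
        also have "\<dots> \<le> exp (\<phi> y) / exp (y * u)"
          using b[of y] by (intro divide_right_mono) auto
        also have "\<dots> = exp (\<phi> y - y * u)" by (simp add: exp_diff)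
        finally have "ln Pr \<le> ln (exp (\<phi> y - y * u))" using Ppos by (subst ln_le_cancel_iff) auto
        then have "ln Pr \<le> \<phi> y - y * u" by simp
        then show ?thesis by (simp add: algebra_simps)
      qed
    qed
    then have "exp (ln Pr) \<le> exp (- young_fenchel \<phi> u)" by simp
    then have "Pr \<le> exp (- young_fenchel \<phi> u)" using Ppos by simp
    then show ?thesis unfolding Pr_def .
  qed
qed


lemma harm_le_ln: "K \<ge> 1 \<Longrightarrow> (harm K :: real) \<le> 1 + ln (real K)"
proof -
  assume "K \<ge> 1"
  then obtain m where m: "K = Suc m" by (cases K) auto
  have "harm (Suc m) - ln (real (Suc m)) \<le> harm (Suc 0) - ln (real (Suc 0))"
    using decseq_harm_diff_ln unfolding decseq_def by blast
  then show ?thesis using m by (simp add: harm_def)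
qed

lemma count_pairs:
  fixes T :: real assumes T: "T \<ge> 1"
  shows "finite {(k, n). 1 \<le> k \<and> 1 \<le> n \<and> real (k * n) \<le> T}"
    and "real (card {(k, n). 1 \<le> k \<and> 1 \<le> n \<and> real (k * n) \<le> T}) \<le> T * (1 + ln T)"
proof -
  define K where "K = nat \<lfloor>T\<rfloor>"
  define B where "B k = {1..nat \<lfloor>T / real k\<rfloor>}" for k :: nat
  let ?S = "{(k, n). 1 \<le> k \<and> 1 \<le> n \<and> real (k * n) \<le> T}"
  have sub: "?S \<subseteq> Sigma {1..K} B"
  proof
    fix z assume "z \<in> ?S"
    then obtain k n where z: "z = (k, n)" "1 \<le> k" "1 \<le> n" "real (k * n) \<le> T" by auto
    have "real k \<le> real (k * n)" using z by simp
    then have "real k \<le> T" using z by linarith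
    then have "k \<le> K" unfolding K_def by (simp add: le_nat_floor)
    moreover have "real n \<le> T / real k" using z by (simp add: field_simps)
    then have "n \<le> nat \<lfloor>T / real k\<rfloor>" by (simp add: le_nat_floor)
    ultimately show "z \<in> Sigma {1..K} B" using z unfolding B_def by auto
  qed
  have fin: "finite (Sigma {1..K} B)" unfolding B_def by auto
  then show "finite ?S" using sub finite_subset by blast
  have "card ?S \<le> card (Sigma {1..K} B)" by (rule card_mono[OF fin sub])
  also have "card (Sigma {1..K} B) = (\<Sum>k\<in>{1..K}. nat \<lfloor>T / real k\<rfloor>)"
    by (subst card_SigmaI) (auto simp: B_def)
  finally have "real (card ?S) \<le> real (\<Sum>k\<in>{1..K}. nat \<lfloor>T / real k\<rfloor>)"
    by (simp only: of_nat_le_iff)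
  also have "\<dots> = (\<Sum>k\<in>{1..K}. real (nat \<lfloor>T / real k\<rfloor>))" by (simp only: of_nat_sum)
  also have "\<dots> \<le> (\<Sum>k\<in>{1..K}. T * inverse (real k))"
  proof (rule sum_mono)
    fix k assume "k \<in> {1..K}"
    have "T / real k \<ge> 0" using T by simp
    then have "real (nat \<lfloor>T / real k\<rfloor>) \<le> T / real k" by linarith
    then show "real (nat \<lfloor>T / real k\<rfloor>) \<le> T * inverse (real k)" by (simp add: field_simps)
  qed
  also have "\<dots> = T * harm K" by (simp add: harm_def sum_distrib_left)
  also have "\<dots> \<le> T * (1 + ln T)"
  proof -
    have K1: "K \<ge> 1" using T unfolding K_def by linarith
    have "real K \<le> T" using T unfolding K_def by linarith
    then have "ln (real K) \<le> ln T" using K1 by simp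
    then have "harm K \<le> 1 + ln T" using harm_le_ln[OF K1] by linarith
    then show ?thesis using T by (intro mult_left_mono) auto
  qed
  finally show "real (card ?S) \<le> T * (1 + ln T)" .
qed


context orl begin

abbreviation "\<psi> \<equiv> young_fenchel \<phi>"
abbreviation "q \<equiv> gen_inv p"

lemma summable_b:
  assumes d: "\<delta> > 0"
    and hyp: "(\<integral>\<^sup>+ x\<in>{0..}. ennreal (young_fenchel \<phi> x * gen_inv p x * exp (- \<delta> * gen_inv p x)) \<partial>lborel) < \<infinity>"
  shows "summable (\<lambda>i::nat. (1 + \<psi> ((real i + 1) * \<delta>)) * exp (- \<delta> * q ((real i + 2) * \<delta>)))"
proof -
  define f where "f x = young_fenchel \<phi> x * gen_inv p x * exp (- \<delta> * gen_inv p x)" for x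
  define c where "c i = \<psi> ((real i + 1) * \<delta>) * q ((real i + 1) * \<delta>) * exp (- \<delta> * q ((real i + 2) * \<delta>))" for i :: nat
  define I where "I i = {(real i + 1) * \<delta> ..< (real i + 2) * \<delta>}" for i :: nat
  have c0: "c i \<ge> 0" for i
    unfolding c_def using psi_nonneg[OF N, of "(real i + 1) * \<delta>"] q_nonneg[of "(real i + 1) * \<delta>"] d
    by simp
  have cf: "c j \<le> f x" if "x \<in> I j" for j x
  proof -
    have x: "(real j + 1) * \<delta> \<le> x" "x < (real j + 2) * \<delta>" using that unfolding I_def by auto
    have pos: "(real j + 1) * \<delta> > 0" using d by simp
    have 1: "\<psi> ((real j + 1) * \<delta>) \<le> \<psi> x" by (rule psi_mono[OF N]) (use pos x in auto)
    have 2: "q ((real j + 1) * \<delta>) \<le> q x" by (rule q_mono) (use pos x in auto)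
    have 3: "q x \<le> q ((real j + 2) * \<delta>)" by (rule q_mono) (use pos x in auto)
    have 4: "exp (- \<delta> * q ((real j + 2) * \<delta>)) \<le> exp (- \<delta> * q x)" using 3 d by simp
    have "\<psi> ((real j + 1) * \<delta>) * q ((real j + 1) * \<delta>) \<le> \<psi> x * q x"
      by (rule mult_mono[OF 1 2]) (use psi_nonneg[OF N] q_nonneg pos x in auto)
    then show ?thesis unfolding c_def f_def
      by (rule mult_mono[OF _ 4]) (use psi_nonneg[OF N] q_nonneg pos x in auto)
  qed
  have disj: "i = j" if "x \<in> I i" "x \<in> I j" for i j x
  proof -
    have "(real i + 1) * \<delta> < (real j + 2) * \<delta>" "(real j + 1) * \<delta> < (real i + 2) * \<delta>"
      using that unfolding I_def by auto
    then have "real i + 1 < real j + 2" "real j + 1 < real i + 2" using d by auto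
    then show ?thesis by linarith
  qed
  have I0: "0 \<le> x" if "x \<in> I i" for i x
  proof -
    have "(real i + 1) * \<delta> \<le> x" using that unfolding I_def by simp
    moreover have "0 \<le> (real i + 1) * \<delta>" using d by simp
    ultimately show ?thesis by linarith
  qed
  have pw: "(\<Sum>i<n. ennreal (c i) * indicator (I i) x) \<le> ennreal (f x) * indicator {0..} x" for n x
  proof (cases "\<exists>j<n. x \<in> I j")
    case True
    then obtain j where j: "j < n" "x \<in> I j" by blast
    have "(\<Sum>i<n. ennreal (c i) * indicator (I i) x) = (\<Sum>i<n. if i = j then ennreal (c j) else 0)"
      by (rule sum.cong) (use disj j in \<open>auto simp: indicator_def\<close>)
    also have "\<dots> = ennreal (c j)" using j by simp
    also have "\<dots> \<le> ennreal (f x) * indicator {0..} x"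
      using cf[OF j(2)] I0[OF j(2)] by (simp add: ennreal_leI)
    finally show ?thesis .
  next
    case False
    then have "(\<Sum>i<n. ennreal (c i) * indicator (I i) x) = 0"
      by (intro sum.neutral) (auto simp: indicator_def)
    then show ?thesis by simp
  qed
  have hyp': "(\<integral>\<^sup>+ x\<in>{0..}. ennreal (f x) \<partial>lborel) < \<infinity>"
    using hyp unfolding f_def .
  then obtain r where r: "r \<ge> 0" "(\<integral>\<^sup>+ x\<in>{0..}. ennreal (f x) \<partial>lborel) = ennreal r"
    unfolding infinity_ennreal_def less_top_ennreal by blast
  have bnd: "(\<Sum>i<n. c i * \<delta>) \<le> r" for n
  proof -
    have "ennreal (\<Sum>i<n. c i * \<delta>) = (\<Sum>i<n. ennreal (c i * \<delta>))"
      by (rule sum_ennreal[symmetric]) (use c0 d in simp)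
    also have "\<dots> = (\<Sum>i<n. ennreal (c i) * ennreal \<delta>)"
      by (rule sum.cong[OF refl], rule ennreal_mult) (use c0 d in auto)
    also have "\<dots> = (\<Sum>i<n. ennreal (c i) * emeasure lborel (I i))"
    proof (rule sum.cong[OF refl])
      fix i assume "i \<in> {..<n}"
      have "emeasure lborel (I i) = ennreal ((real i + 2) * \<delta> - (real i + 1) * \<delta>)"
        unfolding I_def using d by (intro emeasure_lborel_Ico) simp
      also have "(real i + 2) * \<delta> - (real i + 1) * \<delta> = \<delta>" by (simp add: algebra_simps)
      finally show "ennreal (c i) * ennreal \<delta> = ennreal (c i) * emeasure lborel (I i)" by simp
    qed
    also have "\<dots> = (\<Sum>i<n. \<integral>\<^sup>+ x. ennreal (c i) * indicator (I i) x \<partial>lborel)"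
      by (intro sum.cong refl nn_integral_cmult_indicator[symmetric]) (auto simp: I_def)
    also have "\<dots> = (\<integral>\<^sup>+ x. (\<Sum>i<n. ennreal (c i) * indicator (I i) x) \<partial>lborel)"
      by (rule nn_integral_sum[symmetric]) (auto simp: I_def)
    also have "\<dots> \<le> (\<integral>\<^sup>+ x\<in>{0..}. ennreal (f x) \<partial>lborel)"
      by (rule nn_integral_mono) (rule pw)
    also have "\<dots> = ennreal r" by (rule r(2))
    finally have "ennreal (\<Sum>i<n. c i * \<delta>) \<le> ennreal r" .
    then show ?thesis using r(1) by (simp only: ennreal_le_iff)
  qed
  have sc: "summable (\<lambda>i. c i * \<delta>)"
    by (rule summableI_nonneg_bounded[OF _ bnd]) (use c0 d in simp)
  then have sc2: "summable (\<lambda>i. (2 / \<delta>) * (c i * \<delta>))" by (rule summable_mult)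
  define i0 where "i0 = nat \<lceil>(1 + \<phi> 1 + \<bar>p 1\<bar>) / \<delta>\<rceil>"
  show ?thesis
  proof (rule summable_comparison_test_ev[OF _ sc2])
    show "\<forall>\<^sub>F i in sequentially. norm ((1 + \<psi> ((real i + 1) * \<delta>)) * exp (- \<delta> * q ((real i + 2) * \<delta>)))
            \<le> 2 / \<delta> * (c i * \<delta>)"
    proof (rule eventually_sequentiallyI[of i0])
      fix i assume i: "i0 \<le> i"
      define x where "x = (real i + 1) * \<delta>"
      have "(1 + \<phi> 1 + \<bar>p 1\<bar>) / \<delta> \<le> real i0" unfolding i0_def by linarith
      also have "\<dots> \<le> real i + 1" using i by simp
      finally have "1 + \<phi> 1 + \<bar>p 1\<bar> \<le> x" using d unfolding x_def by (simp add: field_simps)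
      then have x1: "1 + \<phi> 1 \<le> x" "p 1 \<le> x" "x > 0" using phi_nonneg[OF N, of 1] by auto
      have psi1: "\<psi> x \<ge> 1" using psi_ge[OF N, of x 1] x1 by simp
      have q1: "q x \<ge> 1" using q_ge1[OF x1(3) x1(2)] .
      have "1 + \<psi> x \<le> 2 * (\<psi> x * q x)"
      proof -
        have "\<psi> x \<le> \<psi> x * q x" using psi1 q1 by (simp add: mult_le_cancel_left1)
        then show ?thesis using psi1 by linarith
      qed
      then have "(1 + \<psi> x) * exp (- \<delta> * q ((real i + 2) * \<delta>)) \<le> 2 * (\<psi> x * q x) * exp (- \<delta> * q ((real i + 2) * \<delta>))"
        by (rule mult_right_mono) simp
      moreover have "2 / \<delta> * (c i * \<delta>) = 2 * (\<psi> x * q x) * exp (- \<delta> * q ((real i + 2) * \<delta>))"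
        unfolding c_def x_def using d by simp
      moreover have "1 + \<psi> x \<ge> 0" using psi1 by simp
      ultimately show "norm ((1 + \<psi> ((real i + 1) * \<delta>)) * exp (- \<delta> * q ((real i + 2) * \<delta>))) \<le> 2 / \<delta> * (c i * \<delta>)"
        unfolding x_def by simp
    qed
  qed
qed

end


lemma psi_lt_imp: assumes N: "N_function \<phi>" and "0 \<le> a" "0 \<le> b"
  and "young_fenchel \<phi> a < young_fenchel \<phi> b" shows "a < b"
proof (rule ccontr)
  assume "\<not> a < b"
  then have "young_fenchel \<phi> b \<le> young_fenchel \<phi> a" using psi_mono[OF N, of b a] assms by simp
  then show False using assms by simp
qed

lemma psi_le_imp: assumes N: "N_function \<phi>" and "0 \<le> a" "0 \<le> b"
  and "young_fenchel \<phi> a \<le> young_fenchel \<phi> b" shows "a \<le> b"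
proof (rule ccontr)
  assume "\<not> a \<le> b"
  then have "young_fenchel \<phi> b < young_fenchel \<phi> a" using psi_strict[OF N, of b a] assms by simp
  then show False using assms by simp
qed

context orl begin

lemma ae_e:
  fixes M :: "'a measure" and X :: "nat \<Rightarrow> nat \<Rightarrow> 'a \<Rightarrow> real"
  assumes P: "prob_space M"
    and sg: "\<And>k n. k \<ge> 1 \<Longrightarrow> n \<ge> 1 \<Longrightarrow> phi_subgaussian M \<phi> (X k n)"
    and tau: "\<And>k n. k \<ge> 1 \<Longrightarrow> n \<ge> 1 \<Longrightarrow> tau_phi M \<phi> (X k n) \<le> 1"
    and e0: "\<epsilon>0 > 0"
    and hyp: "\<And>\<epsilon>. 0 < \<epsilon> \<Longrightarrow> \<epsilon> \<le> \<epsilon>0 \<Longrightarrow>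
           (\<integral>\<^sup>+ x\<in>{0..}. ennreal (young_fenchel \<phi> x * gen_inv p x * exp (- \<epsilon> * gen_inv p x)) \<partial>lborel) < \<infinity>"
    and e: "e > 0"
  shows "AE \<omega> in M. \<exists>N. \<forall>m j. m \<ge> 1 \<longrightarrow> j \<ge> 1 \<longrightarrow> max m j \<ge> N \<longrightarrow>
           Max ((\<lambda>(k, n). X k n \<omega>) ` ({1..m} \<times> {1..j})) < inv_nonneg \<psi> (ln (real (m * j))) + e"
proof -
  define \<delta> where "\<delta> = min e \<epsilon>0 / 3"
  have d: "\<delta> > 0" "\<delta> \<le> \<epsilon>0" "3 * \<delta> \<le> e" using e e0 unfolding \<delta>_def by auto
  define T where "T i = exp (\<psi> ((real i + 1) * \<delta>))" for i :: nat
  define S where "S i = {(k, n). 1 \<le> k \<and> 1 \<le> n \<and> real (k * n) \<le> T i}" for i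
  define A where "A i k n = {\<omega> \<in> space M. (real i + 3) * \<delta> \<le> X k n \<omega>}" for i k n
  define E where "E i = (\<Union>z\<in>S i. case z of (k, n) \<Rightarrow> A i k n)" for i
  have T1: "T i \<ge> 1" for i
  proof -
    have "0 \<le> \<psi> ((real i + 1) * \<delta>)" using psi_nonneg[OF N] d by simp
    then show ?thesis unfolding T_def by simp
  qed
  have lnT: "ln (T i) = \<psi> ((real i + 1) * \<delta>)" for i unfolding T_def by simp
  have Sfin: "finite (S i)" for i unfolding S_def using count_pairs(1)[OF T1] .
  have Scard: "real (card (S i)) \<le> T i * (1 + ln (T i))" for i
    unfolding S_def using count_pairs(2)[OF T1] .
  have Sge: "1 \<le> k \<and> 1 \<le> n" if "(k, n) \<in> S i" for i k n using that unfolding S_def by auto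
  have Ameas: "A i k n \<in> sets M" if "k \<ge> 1" "n \<ge> 1" for i k n
  proof -
    have [measurable]: "X k n \<in> borel_measurable M" using sg[OF that] unfolding phi_subgaussian_def by blast
    show ?thesis unfolding A_def by measurable
  qed
  have Emeas: "E i \<in> sets M" for i
    unfolding E_def by (rule sets.finite_UN[OF Sfin]) (auto dest: Sge intro: Ameas)
  have Abnd: "measure M (A i k n) \<le> exp (- \<psi> ((real i + 3) * \<delta>))" if "k \<ge> 1" "n \<ge> 1" for i k n
  proof -
    have Xm: "X k n \<in> borel_measurable M" using sg[OF that] unfolding phi_subgaussian_def by blast
    show ?thesis unfolding A_def
      by (rule chernoff[OF P N Xm subg_one[OF N sg[OF that] tau[OF that]]]) (use d in simp)
  qed
  have Ebnd: "measure M (E i) \<le> (1 + \<psi> ((real i + 1) * \<delta>)) * exp (- \<delta> * q ((real i + 2) * \<delta>))" for i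
  proof -
    define \<psi>1 where "\<psi>1 = \<psi> ((real i + 1) * \<delta>)"
    define \<psi>3 where "\<psi>3 = \<psi> ((real i + 3) * \<delta>)"
    define q2 where "q2 = q ((real i + 2) * \<delta>)"
    have "measure M (E i) \<le> (\<Sum>z\<in>S i. measure M (case z of (k, n) \<Rightarrow> A i k n))"
      unfolding E_def by (rule measure_UNION_le[OF Sfin]) (auto dest: Sge intro: Ameas)
    also have "\<dots> \<le> (\<Sum>z\<in>S i. exp (- \<psi>3))"
      by (rule sum_mono) (auto dest: Sge intro: Abnd simp: \<psi>3_def)
    also have "\<dots> = real (card (S i)) * exp (- \<psi>3)" by simp
    also have "\<dots> \<le> (T i * (1 + ln (T i))) * exp (- \<psi>3)"
      by (rule mult_right_mono[OF Scard]) simp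
    also have "\<dots> = (1 + \<psi>1) * exp (\<psi>1 - \<psi>3)"
      unfolding lnT \<psi>1_def[symmetric] unfolding T_def \<psi>1_def[symmetric] by (simp add: exp_diff exp_minus field_simps)
    also have "\<dots> \<le> (1 + \<psi>1) * exp (- \<delta> * q2)"
    proof (rule mult_left_mono)
      have pos: "(real i + 2) * \<delta> > 0" using d by simp
      have "\<psi> ((real i + 2) * \<delta>) + \<delta> * q2 \<le> \<psi> ((real i + 2) * \<delta> + \<delta>)"
        unfolding q2_def by (rule psi_incr[OF pos]) (use d in simp)
      also have "(real i + 2) * \<delta> + \<delta> = (real i + 3) * \<delta>" by (simp add: algebra_simps)
      finally have 1: "\<psi> ((real i + 2) * \<delta>) + \<delta> * q2 \<le> \<psi>3" unfolding \<psi>3_def .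
      have "\<psi>1 \<le> \<psi> ((real i + 2) * \<delta>)" unfolding \<psi>1_def by (rule psi_mono[OF N]) (use d in auto)
      then have "\<psi>1 - \<psi>3 \<le> - \<delta> * q2" using 1 by simp
      then show "exp (\<psi>1 - \<psi>3) \<le> exp (- \<delta> * q2)" by simp
      show "0 \<le> 1 + \<psi>1" unfolding \<psi>1_def using psi_nonneg[OF N, of "(real i + 1) * \<delta>"] d by simp
    qed
    finally show ?thesis unfolding \<psi>1_def q2_def .
  qed
  have summ: "summable (\<lambda>i. measure M (E i))"
  proof (rule summable_comparison_test[OF _ summable_b[OF d(1) hyp[OF d(1) d(2)]]])
    show "\<exists>N. \<forall>n\<ge>N. norm (measure M (E n)) \<le> (1 + \<psi> ((real n + 1) * \<delta>)) * exp (- \<delta> * q ((real n + 2) * \<delta>))"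
      using Ebnd by simp
  qed
  have fin: "emeasure M (E i) < \<infinity>" for i
    using prob_space.emeasure_le_1[OF P, of "E i"] by (simp add: order_le_less_trans)
  have BC: "AE \<omega> in M. eventually (\<lambda>i. \<omega> \<in> space M - E i) sequentially"
    by (rule borel_cantelli_AE1[OF Emeas fin summ])
  show ?thesis
  proof (rule eventually_mono[OF BC])
    fix \<omega> assume "eventually (\<lambda>i. \<omega> \<in> space M - E i) sequentially"
    then obtain I where I: "\<And>i. i \<ge> I \<Longrightarrow> \<omega> \<in> space M - E i" by (auto simp: eventually_sequentially)
    have good: "X k n \<omega> < (real i + 3) * \<delta>" if "i \<ge> I" "(k, n) \<in> S i" for i k n
    proof -
      have "\<omega> \<in> space M" "\<omega> \<notin> A i k n" using I[OF that(1)] that(2) unfolding E_def by auto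
      then show ?thesis unfolding A_def by auto
    qed
    define C where "C = Max (insert 0 ((\<lambda>(k, n). X k n \<omega>) ` S I))"
    have C0: "C \<ge> 0" unfolding C_def by (rule Max_ge) (use Sfin in auto)
    have CX: "X k n \<omega> \<le> C" if "(k, n) \<in> S I" for k n
      unfolding C_def by (rule Max_ge) (use Sfin that in auto)
    define N where "N = nat \<lceil>exp (\<psi> C)\<rceil> + 1"
    show "\<exists>N. \<forall>m j. m \<ge> 1 \<longrightarrow> j \<ge> 1 \<longrightarrow> max m j \<ge> N \<longrightarrow>
           Max ((\<lambda>(k, n). X k n \<omega>) ` ({1..m} \<times> {1..j})) < inv_nonneg \<psi> (ln (real (m * j))) + e"
    proof (intro exI allI impI)
      fix m j :: nat assume mj: "m \<ge> 1" "j \<ge> 1" "max m j \<ge> N"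
      define v where "v = ln (real (m * j))"
      define xm where "xm = inv_nonneg \<psi> v"
      have "1 \<le> m * j" using mj(1,2) by (simp add: one_le_mult_iff)
      then have mj1: "real (m * j) \<ge> 1" by (metis of_nat_1 of_nat_le_iff)
      have v0: "v \<ge> 0" unfolding v_def using mj1 by simp
      have xm: "xm \<ge> 0" "\<psi> xm = v" using psi_inv[OF N v0] unfolding xm_def by auto
      have "real (max m j) \<le> real (m * j)" using mj by (cases "m \<le> j") (auto simp: max_def)
      moreover have "exp (\<psi> C) < real N" unfolding N_def by linarith
      moreover have "real N \<le> real (max m j)" using mj(3) by simp
      ultimately have "exp (\<psi> C) < real (m * j)" by linarith
      then have "ln (exp (\<psi> C)) < ln (real (m * j))" using mj1 by (subst ln_less_cancel_iff) auto
      then have "\<psi> C < v" unfolding v_def by simp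
      then have Cx: "C < xm" using psi_lt_imp[OF N C0 xm(1)] xm(2) by simp
      have each: "X k n \<omega> < xm + e" if kn: "k \<in> {1..m}" "n \<in> {1..j}" for k n
      proof (cases "(k, n) \<in> S I")
        case True
        then show ?thesis using CX[OF True] Cx e by simp
      next
        case False
        have k1: "1 \<le> k" "1 \<le> n" using kn by auto
        have "1 \<le> k * n" using k1 by (simp add: one_le_mult_iff)
        then have kn1: "real (k * n) \<ge> 1" by (metis of_nat_1 of_nat_le_iff)
        have big: "real (k * n) > T I" using False k1 unfolding S_def by auto
        define y where "y = inv_nonneg \<psi> (ln (real (k * n)))"
        have y: "y \<ge> 0" "\<psi> y = ln (real (k * n))" using psi_inv[OF N] kn1 unfolding y_def by auto
        have "ln (T I) < ln (real (k * n))" using big T1[of I] by simp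
        then have "\<psi> ((real I + 1) * \<delta>) < \<psi> y" using lnT y by simp
        then have yI: "(real I + 1) * \<delta> < y" using psi_lt_imp[OF N, of "(real I + 1) * \<delta>" y] y(1) d by simp
        define i where "i = nat \<lfloor>y / \<delta>\<rfloor>"
        have "real I + 1 < y / \<delta>" using yI d by (simp add: field_simps)
        then have iI: "i \<ge> I" unfolding i_def by linarith
        have i1: "real i * \<delta> \<le> y" "y < (real i + 1) * \<delta>"
        proof -
          have z0: "0 \<le> y / \<delta>" using y(1) d by simp
          have fl: "real i = of_int \<lfloor>y / \<delta>\<rfloor>" unfolding i_def using z0 by simp
          have "real i \<le> y / \<delta>" using fl floor_correct[of "y / \<delta>"] by linarith
          moreover have "y / \<delta> < real i + 1" using fl floor_correct[of "y / \<delta>"] by linarith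
          ultimately have "real i \<le> y / \<delta>" "y / \<delta> < real i + 1" by auto
          then show "real i * \<delta> \<le> y" "y < (real i + 1) * \<delta>" using d by (simp_all add: field_simps)
        qed
        have "\<psi> y \<le> \<psi> ((real i + 1) * \<delta>)" by (rule psi_mono[OF N y(1)]) (use i1 in simp)
        then have "ln (real (k * n)) \<le> ln (T i)" using y lnT by simp
        then have "real (k * n) \<le> T i" using kn1 T1[of i] by simp
        then have inS: "(k, n) \<in> S i" unfolding S_def using k1 by auto
        have "X k n \<omega> < (real i + 3) * \<delta>" by (rule good[OF iI inS])
        also have "\<dots> = real i * \<delta> + 3 * \<delta>" by (simp add: algebra_simps)
        also have "\<dots> \<le> y + e" using i1 d by simp
        also have "y \<le> xm"
        proof (rule psi_le_imp[OF N y(1) xm(1)])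
          have "k * n \<le> m * j" using kn by (intro mult_le_mono) auto
          then have "real (k * n) \<le> real (m * j)" by (simp only: of_nat_le_iff)
          then show "\<psi> y \<le> \<psi> xm" using y xm kn1 unfolding v_def by simp
        qed
        finally show ?thesis by simp
      qed
      have ne: "({1..m} \<times> {1..j}) \<noteq> {}" using mj by auto
      show "Max ((\<lambda>(k, n). X k n \<omega>) ` ({1..m} \<times> {1..j})) < inv_nonneg \<psi> (ln (real (m * j))) + e"
        unfolding xm_def[symmetric] v_def[symmetric]
        by (subst Max_less_iff) (use ne each in auto)
    qed
  qed
qed

end

theorem corollary1:
  fixes M :: "'a measure" and \<phi> p :: "real \<Rightarrow> real"
    and X :: "nat \<Rightarrow> nat \<Rightarrow> 'a \<Rightarrow> real" and \<epsilon>0 :: real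
  assumes "prob_space M"
    and "N_function \<phi>"
    and "mono p"
    and "\<And>x. \<phi> x = integral {0..\<bar>x\<bar>} p"
    and "\<And>k n. k \<ge> 1 \<Longrightarrow> n \<ge> 1 \<Longrightarrow> phi_subgaussian M \<phi> (X k n)"
    and "\<And>k n. k \<ge> 1 \<Longrightarrow> n \<ge> 1 \<Longrightarrow> tau_phi M \<phi> (X k n) \<le> 1"
    and "\<epsilon>0 > 0"
    and "\<And>\<epsilon>. 0 < \<epsilon> \<Longrightarrow> \<epsilon> \<le> \<epsilon>0 \<Longrightarrow>
           (\<integral>\<^sup>+ x\<in>{0..}. ennreal (young_fenchel \<phi> x * gen_inv p x * exp (- \<epsilon> * gen_inv p x)) \<partial>lborel) < \<infinity>"
  shows "AE \<omega> in M. \<forall>e>0. \<exists>N. \<forall>m j. m \<ge> 1 \<longrightarrow> j \<ge> 1 \<longrightarrow> max m j \<ge> N \<longrightarrow>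
           \<bar>max (Max ((\<lambda>(k, n). X k n \<omega>) ` ({1..m} \<times> {1..j}))
                   - inv_nonneg (young_fenchel \<phi>) (ln (real (m * j)))) 0\<bar> < e"
proof -
  interpret orl \<phi> p by unfold_locales (use assms(2,3,4) in auto)
  have "\<forall>r::nat. AE \<omega> in M. \<exists>N. \<forall>m j. m \<ge> 1 \<longrightarrow> j \<ge> 1 \<longrightarrow> max m j \<ge> N \<longrightarrow>
           Max ((\<lambda>(k, n). X k n \<omega>) ` ({1..m} \<times> {1..j})) < inv_nonneg (young_fenchel \<phi>) (ln (real (m * j))) + inverse (real (Suc r))"
  proof
    fix r :: nat
    show "AE \<omega> in M. \<exists>N. \<forall>m j. m \<ge> 1 \<longrightarrow> j \<ge> 1 \<longrightarrow> max m j \<ge> N \<longrightarrow>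
           Max ((\<lambda>(k, n). X k n \<omega>) ` ({1..m} \<times> {1..j})) < inv_nonneg (young_fenchel \<phi>) (ln (real (m * j))) + inverse (real (Suc r))"
      by (rule ae_e[OF assms(1) assms(5) assms(6) assms(7) assms(8)]) simp_all
  qed
  then have all: "AE \<omega> in M. \<forall>r::nat. \<exists>N. \<forall>m j. m \<ge> 1 \<longrightarrow> j \<ge> 1 \<longrightarrow> max m j \<ge> N \<longrightarrow>
           Max ((\<lambda>(k, n). X k n \<omega>) ` ({1..m} \<times> {1..j})) < inv_nonneg (young_fenchel \<phi>) (ln (real (m * j))) + inverse (real (Suc r))"
    by (rule AE_all_countable[THEN iffD2])
  show ?thesis
  proof (rule eventually_mono[OF all])
    fix \<omega>
    assume H: "\<forall>r::nat. \<exists>N. \<forall>m j. m \<ge> 1 \<longrightarrow> j \<ge> 1 \<longrightarrow> max m j \<ge> N \<longrightarrow>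
           Max ((\<lambda>(k, n). X k n \<omega>) ` ({1..m} \<times> {1..j})) < inv_nonneg (young_fenchel \<phi>) (ln (real (m * j))) + inverse (real (Suc r))"
    show "\<forall>e>0. \<exists>N. \<forall>m j. m \<ge> 1 \<longrightarrow> j \<ge> 1 \<longrightarrow> max m j \<ge> N \<longrightarrow>
           \<bar>max (Max ((\<lambda>(k, n). X k n \<omega>) ` ({1..m} \<times> {1..j}))
                   - inv_nonneg (young_fenchel \<phi>) (ln (real (m * j)))) 0\<bar> < e"
    proof (intro allI impI)
      fix e :: real assume e: "e > 0"
      obtain r :: nat where r: "inverse (real (Suc r)) < e" using reals_Archimedean[OF e] by blast
      obtain N where N: "\<And>m j. m \<ge> 1 \<Longrightarrow> j \<ge> 1 \<Longrightarrow> max m j \<ge> N \<Longrightarrow>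
           Max ((\<lambda>(k, n). X k n \<omega>) ` ({1..m} \<times> {1..j})) < inv_nonneg (young_fenchel \<phi>) (ln (real (m * j))) + inverse (real (Suc r))"
        using H by blast
      show "\<exists>N. \<forall>m j. m \<ge> 1 \<longrightarrow> j \<ge> 1 \<longrightarrow> max m j \<ge> N \<longrightarrow>
           \<bar>max (Max ((\<lambda>(k, n). X k n \<omega>) ` ({1..m} \<times> {1..j}))
                   - inv_nonneg (young_fenchel \<phi>) (ln (real (m * j)))) 0\<bar> < e"
      proof (intro exI allI impI)
        fix m j :: nat assume mj: "m \<ge> 1" "j \<ge> 1" "max m j \<ge> N"
        define Z where "Z = Max ((\<lambda>(k, n). X k n \<omega>) ` ({1..m} \<times> {1..j}))"
        define x where "x = inv_nonneg (young_fenchel \<phi>) (ln (real (m * j)))"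
        have "Z < x + inverse (real (Suc r))" using N[OF mj] unfolding Z_def x_def .
        then have "Z - x < e" using r by linarith
        then have "\<bar>max (Z - x) 0\<bar> < e" using e by simp
        then show "\<bar>max (Max ((\<lambda>(k, n). X k n \<omega>) ` ({1..m} \<times> {1..j}))
                   - inv_nonneg (young_fenchel \<phi>) (ln (real (m * j)))) 0\<bar> < e"
          unfolding Z_def x_def .
      qed
    qed
  qed
qed

end
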